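(* Let $\ell\in\{\ell_{lin},\ell_{log}\}$ and let $L_f$ be the strong smoothness constant of $f$ defined below. (i) If $\beta^*$ is an $\alpha$-stationary point of (SCL) for some $\alpha>0$, then $\beta^*$ is a local minimizer of (SCL); if moreover $\|\beta_1^*\|_0<s_1$ and $\|\beta_2^*\|_0<s_2$, then $\beta^*$ is a global minimizer of (SCL). (ii) Conversely, if $\beta^*$ is a global minimizer of (SCL), then $\beta^*$ is an $\alpha$-stationary point of (SCL) for every $0<\alpha<1/L_f$.
   Context: Data: $X\in\mathbb{R}^{n\times p_1}$, $Z\in\mathbb{R}^{n\times p_2}$ with rows $x_i,z_i$; $y\in\mathbb{R}^n$ ($y\in\{0,1\}^n$ for $\ell_{log}$); $a,b,c>0$; integers $1\le s_j\le p_j$. Losses $\ell_{lin}(\beta;X,y)=\frac12\sum_i(y_i-\langle x_i,\beta\rangle)^2$, $\ell_{log}(\beta;X,y)=\sum_i(\log(1+\exp\langle x_i,\beta\rangle)-y_i\langle x_i,\beta\rangle)$. Objective $f(\beta)=\frac1n[a\ell(\beta_1;X,y)+b\ell(\beta_2;Z,y)+\frac c2\|X\beta_1-Z\beta_2\|^2]$, $\beta=(\beta_1;\beta_2)$. (SCL): minimize $f$ subject to $\|\beta_1\|_0\le s_1,\|\beta_2\|_0\le s_2$; $\Sigma_j=\{v\in\mathbb{R}^{p_j}:\|v\|_0\le s_j\}$. Local minimizer: feasible point minimizing $f$ over feasible points in a neighborhood. $\Pi_{\Sigma_j}(w)=\arg\min_{u\in\Sigma_j}\|w-u\|$ (set-valued).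 $\beta^*$ is $\alpha$-stationary if $\beta_j^*\in\Pi_{\Sigma_j}(\beta_j^*-\alpha\nabla_jf(\beta^* ))$, $j=1,2$, where $\nabla_j f$ is the gradient in $\beta_j$. Constant $L_f$: for $\ell_{log}$, $L_f=\lambda_{\max}\big(\frac1n\begin{bmatrix}(a/4+c)X^\top X&-cX^\top Z\\-cZ^\top X&(b/4+c)Z^\top Z\end{bmatrix}\big)$; for $\ell_{lin}$, $L_f=\lambda_{\max}\big(\frac1n\begin{bmatrix}(a+c)X^\top X&-cX^\top Z\\-cZ^\top X&(b+c)Z^\top Z\end{bmatrix}\big)$. *)

theory Defs
  imports "HOL-Analysis.Analysis"
begin

datatype loss = Lin | Log

definition l0norm :: "real^'p \<Rightarrow> nat" where
  "l0norm v = card {i. v $ i \<noteq> 0}"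

definition sparse_set :: "nat \<Rightarrow> (real^'p) set" where
  "sparse_set s = {v. l0norm v \<le> s}"

definition proj_sparse :: "nat \<Rightarrow> real^'p \<Rightarrow> (real^'p) set" where
  "proj_sparse s w = {u \<in> sparse_set s. \<forall>v \<in> sparse_set s. dist w u \<le> dist w v}"

definition loss_fun :: "loss \<Rightarrow> real^'p \<Rightarrow> real^'p^'n \<Rightarrow> real^'n \<Rightarrow> real" where
  "loss_fun l \<beta> X y = (case l of
      Lin \<Rightarrow> (1/2) * (\<Sum>i\<in>UNIV. (y $ i - (X *v \<beta>) $ i)^2)
    | Log \<Rightarrow> (\<Sum>i\<in>UNIV. ln (1 + exp ((X *v \<beta>) $ i)) - y $ i * (X *v \<beta>) $ i))"

definition obj :: "loss \<Rightarrow> real \<Rightarrow> real \<Rightarrow> real \<Rightarrow> real^'p1^'n \<Rightarrow> real^'p2^'n \<Rightarrow> real^'n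
    \<Rightarrow> (real^'p1) \<times> (real^'p2) \<Rightarrow> real" where
  "obj l a b c X Z y \<beta> = (1 / real CARD('n)) *
     (a * loss_fun l (fst \<beta>) X y + b * loss_fun l (snd \<beta>) Z y
      + (c/2) * (norm (X *v fst \<beta> - Z *v snd \<beta>))^2)"

definition feasible :: "nat \<Rightarrow> nat \<Rightarrow> (real^'p1) \<times> (real^'p2) \<Rightarrow> bool" where
  "feasible s1 s2 \<beta> \<longleftrightarrow> fst \<beta> \<in> sparse_set s1 \<and> snd \<beta> \<in> sparse_set s2"

definition local_min :: "((real^'p1) \<times> (real^'p2) \<Rightarrow> real) \<Rightarrow> nat \<Rightarrow> nat \<Rightarrow> (real^'p1) \<times> (real^'p2) \<Rightarrow> bool" where
  "local_min f s1 s2 \<beta> \<longleftrightarrow> feasible s1 s2 \<beta> \<and>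
     (\<exists>e>0. \<forall>\<gamma>. feasible s1 s2 \<gamma> \<and> dist \<gamma> \<beta> < e \<longrightarrow> f \<beta> \<le> f \<gamma>)"

definition global_min :: "((real^'p1) \<times> (real^'p2) \<Rightarrow> real) \<Rightarrow> nat \<Rightarrow> nat \<Rightarrow> (real^'p1) \<times> (real^'p2) \<Rightarrow> bool" where
  "global_min f s1 s2 \<beta> \<longleftrightarrow> feasible s1 s2 \<beta> \<and>
     (\<forall>\<gamma>. feasible s1 s2 \<gamma> \<longrightarrow> f \<beta> \<le> f \<gamma>)"

definition grad1 :: "((real^'p1) \<times> (real^'p2) \<Rightarrow> real) \<Rightarrow> (real^'p1) \<times> (real^'p2) \<Rightarrow> real^'p1" where
  "grad1 f \<beta> = (THE g. GDERIV (\<lambda>u. f (u, snd \<beta>)) (fst \<beta>) :> g)"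

definition grad2 :: "((real^'p1) \<times> (real^'p2) \<Rightarrow> real) \<Rightarrow> (real^'p1) \<times> (real^'p2) \<Rightarrow> real^'p2" where
  "grad2 f \<beta> = (THE g. GDERIV (\<lambda>u. f (fst \<beta>, u)) (snd \<beta>) :> g)"

definition alpha_stationary :: "((real^'p1) \<times> (real^'p2) \<Rightarrow> real) \<Rightarrow> nat \<Rightarrow> nat \<Rightarrow> real
    \<Rightarrow> (real^'p1) \<times> (real^'p2) \<Rightarrow> bool" where
  "alpha_stationary f s1 s2 \<alpha> \<beta> \<longleftrightarrow>
     fst \<beta> \<in> proj_sparse s1 (fst \<beta> - \<alpha> *\<^sub>R grad1 f \<beta>) \<and>
     snd \<beta> \<in> proj_sparse s2 (snd \<beta> - \<alpha> *\<^sub>R grad2 f \<beta>)"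

definition Lmat :: "loss \<Rightarrow> real \<Rightarrow> real \<Rightarrow> real \<Rightarrow> real^'p1^'n \<Rightarrow> real^'p2^'n
    \<Rightarrow> real^('p1 + 'p2)^('p1 + 'p2)" where
  "Lmat l a b c X Z = (let ca = (case l of Lin \<Rightarrow> a | Log \<Rightarrow> a/4);
                           cb = (case l of Lin \<Rightarrow> b | Log \<Rightarrow> b/4);
                           XX = transpose X ** X; XZ = transpose X ** Z;
                           ZX = transpose Z ** X; ZZ = transpose Z ** Z in
     (\<chi> i j. (1 / real CARD('n)) *
        (case i of
           Inl i1 \<Rightarrow> (case j of Inl j1 \<Rightarrow> (ca + c) * XX $ i1 $ j1 | Inr j2 \<Rightarrow> - c * XZ $ i1 $ j2)
         | Inr i2 \<Rightarrow> (case j of Inl j1 \<Rightarrow> - c * ZX $ i2 $ j1 | Inr j2 \<Rightarrow> (cb + c) * ZZ $ i2 $ j2))))"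

definition lambda_max :: "real^'m^'m \<Rightarrow> real" where
  "lambda_max M = Max {\<mu>. \<exists>v. v \<noteq> 0 \<and> M *v v = \<mu> *\<^sub>R v}"

definition Lf :: "loss \<Rightarrow> real \<Rightarrow> real \<Rightarrow> real \<Rightarrow> real^'p1^'n \<Rightarrow> real^'p2^'n \<Rightarrow> real" where
  "Lf l a b c X Z = lambda_max (Lmat l a b c X Z :: real^('p1 + 'p2)^('p1 + 'p2))"

end

theory Submission
  imports Defs "HOL-Probability.Hoeffding"
begin


definition psi :: "loss \<Rightarrow> real \<Rightarrow> real \<Rightarrow> real" where
  "psi l yi t = (case l of Lin \<Rightarrow> (1/2)*(yi - t)^2 | Log \<Rightarrow> ln (1 + exp t) - yi * t)"
definition dpsi :: "loss \<Rightarrow> real \<Rightarrow> real \<Rightarrow> real" where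
  "dpsi l yi t = (case l of Lin \<Rightarrow> t - yi | Log \<Rightarrow> exp t / (1 + exp t) - yi)"
definition kap :: "loss \<Rightarrow> real" where
  "kap l = (case l of Lin \<Rightarrow> 1 | Log \<Rightarrow> 1/4)"

lemma loss_fun_psi: "loss_fun l \<beta> X y = (\<Sum>i\<in>UNIV. psi l (y$i) ((X *v \<beta>)$i))"
  by (cases l) (simp_all add: loss_fun_def psi_def sum_distrib_left)

lemma log_split:
  fixes t x :: real
  shows "ln (1 + exp (t + x)) = ln (1 + exp t) + ln (1 + (exp t / (1 + exp t)) * (exp x - 1))"
    and "0 < exp t / (1 + exp t)" "exp t / (1 + exp t) < 1"
proof -
  define p where "p = exp t / (1 + exp t)"
  have pos: "0 < 1 + exp t" by (simp add: add_pos_pos)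
  hence e: "1 + exp (t + x) = (1 + exp t) * (1 + p * (exp x - 1))"
    unfolding p_def by (simp add: field_simps exp_add)
  have "0 < 1 + p * (exp x - 1)"
    using e pos by (metis exp_gt_zero zero_less_mult_pos add_pos_pos zero_less_one)
  thus "ln (1 + exp (t + x)) = ln (1 + exp t) + ln (1 + (exp t / (1 + exp t)) * (exp x - 1))"
    using e pos by (simp add: ln_mult p_def)
  show "0 < exp t / (1 + exp t)" by (simp add: add_pos_pos)
  show "exp t / (1 + exp t) < 1" using pos by (simp add: divide_less_eq)
qed

lemma log_lower:
  fixes p x :: real assumes "0 < p" "p < 1"
  shows "p * x \<le> ln (1 + p * (exp x - 1))"
proof -
  have "exp ((1 - p) *\<^sub>R 0 + p *\<^sub>R x) \<le> (1 - p) * exp 0 + p * exp x"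
    using convex_onD[OF convex_on_exp[of 1], of p 0 x] assms by simp
  hence "exp (p * x) \<le> 1 + p * (exp x - 1)" by (simp add: algebra_simps)
  moreover have "0 < exp (p*x)" by simp
  ultimately show ?thesis by (metis exp_le_cancel_iff exp_ln less_le_trans)
qed

lemma log_upper:
  fixes p x :: real assumes "0 < p" "p < 1"
  shows "ln (1 + p * (exp x - 1)) \<le> p * x + x^2/8"
proof (cases "x \<ge> 0")
  case True
  show ?thesis using Hoeffdings_lemma_aux[OF True, of p] assms by (simp add: field_simps)
next
  case False
  hence h: "-x \<ge> 0" by simp
  have "- (-x) * (1-p) + ln (1 + (1-p) * (exp (-x) - 1)) \<le> (-x)^2/8"
    using Hoeffdings_lemma_aux[OF h, of "1-p"] assms by simp
  hence "ln (1 + (1-p) * (exp (-x) - 1)) \<le> (1-p)*(-x) + x^2/8" by (simp add: algebra_simps)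
  moreover have "1 + p * (exp x - 1) = exp x * (1 + (1-p) * (exp (-x) - 1))"
    by (simp add: algebra_simps exp_minus_inverse)
  moreover have "0 < 1 + (1-p) * (exp (-x) - 1)"
  proof -
    have "1 + (1-p) * (exp (-x) - 1) = p + (1-p) * exp (-x)" by (simp add: algebra_simps)
    thus ?thesis using assms by (simp add: add_pos_nonneg)
  qed
  ultimately have "ln (1 + p * (exp x - 1)) = x + ln (1 + (1-p) * (exp (-x) - 1))"
    by (simp add: ln_mult)
  thus ?thesis using \<open>ln (1 + (1-p) * (exp (-x) - 1)) \<le> (1-p)*(-x) + x^2/8\<close>
    by (simp add: algebra_simps)
qed

lemma psi_lower: "psi l yi t + dpsi l yi t * (s - t) \<le> psi l yi s"
proof (cases l)
  case Lin
  have "0 \<le> (s - t)^2" by simp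
  thus ?thesis using Lin by (simp add: psi_def dpsi_def power2_eq_square algebra_simps)
next
  case Log
  define x where "x = s - t"
  have s: "s = t + x" by (simp add: x_def)
  show ?thesis using Log log_split(1)[of t x] log_split(2,3)[of t] log_lower[of "exp t / (1 + exp t)" x]
    unfolding s by (simp add: psi_def dpsi_def algebra_simps)
qed

lemma psi_upper: "psi l yi s \<le> psi l yi t + dpsi l yi t * (s - t) + kap l / 2 * (s - t)^2"
proof (cases l)
  case Lin thus ?thesis by (simp add: psi_def dpsi_def kap_def power2_eq_square algebra_simps)
next
  case Log
  define x where "x = s - t"
  have s: "s = t + x" by (simp add: x_def)
  show ?thesis using Log log_split(1)[of t x] log_split(2,3)[of t] log_upper[of "exp t / (1 + exp t)" x]
    unfolding s by (simp add: psi_def dpsi_def kap_def algebra_simps)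
qed



lemma sym_inner:
  fixes M :: "real^'m^'m"
  assumes "transpose M = M"
  shows "u \<bullet> (M *v w) = (M *v u) \<bullet> w"
proof -
  have "u \<bullet> (M *v w) = (u v* M) \<bullet> w" by (simp add: dot_lmul_matrix)
  also have "u v* M = transpose M *v u" by simp
  finally show ?thesis using assms by simp
qed

lemma eig_finite:
  fixes M :: "real^'m^'m"
  assumes sym: "transpose M = M"
  shows "finite {\<mu>. \<exists>v. v \<noteq> 0 \<and> M *v v = \<mu> *\<^sub>R v}"
proof -
  define E where "E = {\<mu>. \<exists>v. v \<noteq> 0 \<and> M *v v = \<mu> *\<^sub>R v}"
  define ev where "ev \<mu> = (SOME v. v \<noteq> 0 \<and> M *v v = \<mu> *\<^sub>R v)" for \<mu>
  have ev: "ev \<mu> \<noteq> 0 \<and> M *v ev \<mu> = \<mu> *\<^sub>R ev \<mu>" if "\<mu> \<in> E" for \<mu>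
    using that unfolding E_def ev_def by (metis (mono_tags, lifting) mem_Collect_eq someI_ex)
  have inj: "inj_on ev E"
  proof (rule inj_onI)
    fix x y assume xy: "x \<in> E" "y \<in> E" "ev x = ev y"
    hence "x *\<^sub>R ev x = y *\<^sub>R ev x" using ev by metis
    hence "(x - y) *\<^sub>R ev x = 0" by (simp add: algebra_simps)
    thus "x = y" using ev[OF xy(1)] by simp
  qed
  have po: "pairwise orthogonal (ev ` E)"
  proof (rule pairwiseI)
    fix u w assume "u \<in> ev ` E" "w \<in> ev ` E" "u \<noteq> w"
    then obtain x y where xy: "x \<in> E" "y \<in> E" "u = ev x" "w = ev y" "x \<noteq> y" by blast
    have "u \<bullet> (M *v w) = (M *v u) \<bullet> w" by (rule sym_inner[OF sym])
    hence "y * (u \<bullet> w) = x * (u \<bullet> w)" using ev[OF xy(1)] ev[OF xy(2)] xy(3,4) by simp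
    hence "(y - x) * (u \<bullet> w) = 0" by (simp add: algebra_simps)
    thus "orthogonal u w" using xy(5) by (simp add: orthogonal_def)
  qed
  have "0 \<notin> ev ` E" using ev by auto
  hence "independent (ev ` E)" using po pairwise_orthogonal_independent by blast
  hence "finite (ev ` E)" using independent_bound by blast
  thus ?thesis using inj finite_image_iff unfolding E_def by blast
qed

lemma quad_le_lambda_max:
  fixes M :: "real^'m^'m"
  assumes sym: "transpose M = M"
  shows "v \<bullet> (M *v v) \<le> lambda_max M * (v \<bullet> v)"
proof -
  define E where "E = {\<mu>. \<exists>v. v \<noteq> 0 \<and> M *v v = \<mu> *\<^sub>R v}"
  have fin: "finite E" using eig_finite[OF sym] unfolding E_def .
  define q where "q v = v \<bullet> (M *v v)" for v :: "real^'m"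
  have cont: "continuous_on (sphere 0 1) q"
    unfolding q_def by (intro continuous_intros linear_continuous_on matrix_vector_mul_bounded_linear)
  have ne: "sphere (0::real^'m) 1 \<noteq> {}"
  proof -
    have "norm (axis undefined (1::real) :: real^'m) = 1" by simp
    thus ?thesis by (metis dist_0_norm empty_iff mem_sphere)
  qed
  obtain v0 where v0: "v0 \<in> sphere 0 1" "\<And>w. w \<in> sphere 0 1 \<Longrightarrow> q w \<le> q v0"
    using continuous_attains_sup[OF compact_sphere ne cont] by blast
  define \<mu> where "\<mu> = q v0"
  have nv0: "v0 \<bullet> v0 = 1" using v0(1) by (simp add: dot_square_norm)
  have bound: "q w \<le> \<mu> * (w \<bullet> w)" for w
  proof (cases "w = 0")
    case True thus ?thesis by (simp add: q_def)
  next
    case False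
    define u where "u = (1 / norm w) *\<^sub>R w"
    have "u \<in> sphere 0 1" using False by (simp add: u_def)
    hence "q u \<le> \<mu>" using v0 \<mu>_def by simp
    moreover have "q u = q w / (norm w)^2"
      by (simp add: u_def q_def matrix_vector_mult_scaleR power2_eq_square)
    moreover have "w \<bullet> w = (norm w)^2" by (simp add: dot_square_norm)
    moreover have "(norm w)^2 > 0" using False by simp
    ultimately show ?thesis by (simp add: divide_le_eq mult.commute)
  qed
  define r where "r = M *v v0 - \<mu> *\<^sub>R v0"
  have rv0: "r \<bullet> v0 = 0"
    unfolding r_def using nv0 by (simp add: inner_diff_left inner_diff_right \<mu>_def q_def inner_commute)
  define \<rho> where "\<rho> = r \<bullet> r"
  define B where "B = r \<bullet> (M *v r)"
  have r0: "r = 0"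
  proof (rule ccontr)
    assume "r \<noteq> 0"
    hence rp: "\<rho> > 0" by (simp add: \<rho>_def)
    have Mv0r: "(M *v v0) \<bullet> r = \<rho>"
    proof -
      have "M *v v0 = r + \<mu> *\<^sub>R v0" by (simp add: r_def)
      thus ?thesis using rv0 by (simp add: \<rho>_def inner_add_left inner_add_right inner_commute)
    qed
    have key: "2 * t * \<rho> + t^2 * B \<le> \<mu> * t^2 * \<rho>" for t
    proof -
      define w where "w = v0 + t *\<^sub>R r"
      have "q w = \<mu> + 2 * t * \<rho> + t^2 * B"
      proof -
        have "q w = v0 \<bullet> (M *v v0) + t * (v0 \<bullet> (M *v r)) + t * (r \<bullet> (M *v v0)) + t^2 * B"
          by (simp add: q_def w_def B_def matrix_vector_right_distrib matrix_vector_mult_scaleR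
              inner_add_left inner_add_right power2_eq_square algebra_simps)
        moreover have "v0 \<bullet> (M *v r) = \<rho>" using sym_inner[OF sym, of v0 r] Mv0r by simp
        moreover have "r \<bullet> (M *v v0) = \<rho>" using Mv0r by (simp add: inner_commute)
        ultimately show ?thesis by (simp add: \<mu>_def q_def)
      qed
      moreover have "w \<bullet> w = 1 + t^2 * \<rho>"
        using nv0 rv0 by (simp add: w_def \<rho>_def inner_add_left inner_add_right inner_commute
            power2_eq_square algebra_simps)
      ultimately show ?thesis using bound[of w] by (simp add: algebra_simps)
    qed
    define C where "C = \<mu> * \<rho> - B"
    define t where "t = \<rho> / (\<bar>C\<bar> + 1)"
    have tp: "t > 0" using rp by (simp add: t_def)
    have "2 * t * \<rho> \<le> t^2 * C" using key[of t] by (simp add: C_def algebra_simps)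
    hence "2 * \<rho> \<le> t * C" using tp by (simp add: power2_eq_square)
    also have "t * C \<le> t * \<bar>C\<bar>" using tp by (simp add: mult_left_mono)
    also have "t * \<bar>C\<bar> < \<rho>"
    proof -
      have "t * \<bar>C\<bar> = \<rho> * (\<bar>C\<bar> / (\<bar>C\<bar> + 1))" by (simp add: t_def)
      also have "\<dots> < \<rho> * 1" using rp by (intro mult_strict_left_mono) auto
      finally show ?thesis by simp
    qed
    finally show False using rp by simp
  qed
  hence "M *v v0 = \<mu> *\<^sub>R v0" by (simp add: r_def)
  moreover have "v0 \<noteq> 0" using v0(1) by auto
  ultimately have "\<mu> \<in> E" unfolding E_def by blast
  hence "\<mu> \<le> lambda_max M" using fin unfolding lambda_max_def E_def[symmetric] by simp
  hence "\<mu> * (v \<bullet> v) \<le> lambda_max M * (v \<bullet> v)" by (simp add: mult_right_mono)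
  thus ?thesis using bound[of v] by (simp add: q_def)
qed



lemma gderiv_from_bounds:
  fixes \<phi> :: "'a::real_inner \<Rightarrow> real"
  assumes lo: "\<And>d. 0 \<le> \<phi> (x + d) - \<phi> x - d \<bullet> G"
    and up: "\<And>d. \<phi> (x + d) - \<phi> x - d \<bullet> G \<le> K * (norm d)^2"
    and K: "K \<ge> 0"
  shows "(THE g. GDERIV \<phi> x :> g) = G"
proof -
  have D: "GDERIV \<phi> x :> G"
    unfolding gderiv_def has_derivative_at'
  proof (intro conjI allI impI)
    show "bounded_linear (\<lambda>h. h \<bullet> G)" by (rule bounded_linear_inner_left)
    fix e :: real assume e: "e > 0"
    show "\<exists>d>0. \<forall>x'. 0 < norm (x' - x) \<and> norm (x' - x) < d \<longrightarrow>
        norm (\<phi> x' - \<phi> x - (x' - x) \<bullet> G) / norm (x' - x) < e"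
    proof (intro exI[of _ "e / (K + 1)"] conjI allI impI)
      show "e / (K + 1) > 0" using e K by simp
      fix x' assume h: "0 < norm (x' - x) \<and> norm (x' - x) < e / (K + 1)"
      define d where "d = x' - x"
      have x': "x' = x + d" by (simp add: d_def)
      have nd: "0 < norm d" "norm d < e / (K + 1)" using h by (auto simp: d_def)
      have "norm (\<phi> x' - \<phi> x - (x' - x) \<bullet> G) \<le> K * (norm d)^2"
        using lo[of d] up[of d] unfolding x' by simp
      hence "norm (\<phi> x' - \<phi> x - (x' - x) \<bullet> G) / norm (x' - x) \<le> K * norm d"
        using nd by (simp add: d_def divide_le_eq power2_eq_square mult.assoc)
      also have "K * norm d \<le> K * (e / (K + 1))" using nd K by (intro mult_left_mono) auto
      also have "K * (e / (K + 1)) < e"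
      proof -
        have "K * (e / (K + 1)) = e * (K / (K + 1))" by simp
        also have "\<dots> < e * 1" using e K by (intro mult_strict_left_mono) auto
        finally show ?thesis by simp
      qed
      finally show "norm (\<phi> x' - \<phi> x - (x' - x) \<bullet> G) / norm (x' - x) < e" .
    qed
  qed
  show ?thesis
  proof (rule the_equality[where P="\<lambda>g. GDERIV \<phi> x :> g", OF D])
    fix g assume "GDERIV \<phi> x :> g"
    hence "(\<lambda>h. h \<bullet> g) = (\<lambda>h. h \<bullet> G)" using D unfolding gderiv_def by (rule has_derivative_unique)
    hence "(g - G) \<bullet> g = (g - G) \<bullet> G" by metis
    hence "(g - G) \<bullet> (g - G) = 0" by (simp add: inner_diff_right)
    thus "g = G" by simp
  qed
qed



definition G1 :: "loss \<Rightarrow> real \<Rightarrow> real \<Rightarrow> real \<Rightarrow> real^'p1^'n \<Rightarrow> real^'p2^'n \<Rightarrow> real^'n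
    \<Rightarrow> (real^'p1) \<times> (real^'p2) \<Rightarrow> real^'p1" where
  "G1 l a b c X Z y \<beta> = (1 / real CARD('n)) *\<^sub>R (transpose X *v
      (a *\<^sub>R (\<chi> i. dpsi l (y$i) ((X *v fst \<beta>)$i)) + c *\<^sub>R (X *v fst \<beta> - Z *v snd \<beta>)))"

lemma sum_psi_lower:
  fixes t t' y :: "real^'n"
  shows "(\<Sum>i\<in>UNIV. psi l (y$i) (t$i)) + (\<chi> i. dpsi l (y$i) (t$i)) \<bullet> (t' - t)
          \<le> (\<Sum>i\<in>UNIV. psi l (y$i) (t'$i))"
proof -
  have "(\<Sum>i\<in>UNIV. psi l (y$i) (t$i)) + (\<chi> i. dpsi l (y$i) (t$i)) \<bullet> (t' - t)
      = (\<Sum>i\<in>UNIV. psi l (y$i) (t$i) + dpsi l (y$i) (t$i) * (t'$i - t$i))"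
    by (simp add: inner_vec_def sum.distrib)
  also have "\<dots> \<le> (\<Sum>i\<in>UNIV. psi l (y$i) (t'$i))"
    by (intro sum_mono psi_lower)
  finally show ?thesis .
qed

lemma sum_psi_upper:
  fixes t t' y :: "real^'n"
  shows "(\<Sum>i\<in>UNIV. psi l (y$i) (t'$i)) \<le> (\<Sum>i\<in>UNIV. psi l (y$i) (t$i))
     + (\<chi> i. dpsi l (y$i) (t$i)) \<bullet> (t' - t) + kap l / 2 * ((t' - t) \<bullet> (t' - t))"
proof -
  have "(\<Sum>i\<in>UNIV. psi l (y$i) (t'$i)) \<le>
       (\<Sum>i\<in>UNIV. psi l (y$i) (t$i) + dpsi l (y$i) (t$i) * (t'$i - t$i) + kap l / 2 * (t'$i - t$i)^2)"
    by (intro sum_mono psi_upper)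
  also have "\<dots> = (\<Sum>i\<in>UNIV. psi l (y$i) (t$i))
     + (\<chi> i. dpsi l (y$i) (t$i)) \<bullet> (t' - t) + kap l / 2 * ((t' - t) \<bullet> (t' - t))"
    by (simp add: inner_vec_def sum.distrib sum_distrib_left power2_eq_square)
  finally show ?thesis .
qed

lemma obj_swap:
  fixes X :: "real^'p1^'n" and Z :: "real^'p2^'n" and y :: "real^'n"
  shows "obj l a b c X Z y (u, v) = obj l b a c Z X y (v, u)"
  by (simp add: obj_def norm_minus_commute algebra_simps)

lemma obj_expand:
  fixes X :: "real^'p1^'n" and Z :: "real^'p2^'n" and y :: "real^'n"
  shows "obj l a b c X Z y (u, v) = (1 / real CARD('n)) *
   (a * (\<Sum>i\<in>UNIV. psi l (y$i) ((X *v u)$i)) + b * (\<Sum>i\<in>UNIV. psi l (y$i) ((Z *v v)$i))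
    + c / 2 * ((X *v u - Z *v v) \<bullet> (X *v u - Z *v v)))"
  by (simp add: obj_def loss_fun_psi dot_square_norm)

lemma G1_inner:
  fixes X :: "real^'p1^'n" and Z :: "real^'p2^'n" and y :: "real^'n"
  shows "G1 l a b c X Z y (u, v) \<bullet> d = (1 / real CARD('n)) *
   (a * ((\<chi> i. dpsi l (y$i) ((X *v u)$i)) \<bullet> (X *v d)) + c * ((X *v u - Z *v v) \<bullet> (X *v d)))"
  by (simp add: G1_def dot_lmul_matrix inner_add_left)

lemma obj_convex:
  fixes X :: "real^'p1^'n" and Z :: "real^'p2^'n" and y :: "real^'n"

  assumes a: "a \<ge> 0" and b: "b \<ge> 0" and c: "c \<ge> 0"
  shows "obj l a b c X Z y (u, v) + G1 l a b c X Z y (u, v) \<bullet> (u' - u)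
          + G1 l b a c Z X y (v, u) \<bullet> (v' - v) \<le> obj l a b c X Z y (u', v')"
proof -
  define t where "t = X *v u"
  define t' where "t' = X *v u'"
  define s where "s = Z *v v"
  define s' where "s' = Z *v v'"
  define P where "P = (\<chi> i. dpsi l (y$i) (t$i))"
  define Q where "Q = (\<chi> i. dpsi l (y$i) (s$i))"
  define St where "St = (\<Sum>i\<in>UNIV. psi l (y$i) (t$i))"
  define St' where "St' = (\<Sum>i\<in>UNIV. psi l (y$i) (t'$i))"
  define Ss where "Ss = (\<Sum>i\<in>UNIV. psi l (y$i) (s$i))"
  define Ss' where "Ss' = (\<Sum>i\<in>UNIV. psi l (y$i) (s'$i))"
  have h1: "St + P \<bullet> (t' - t) \<le> St'" unfolding St_def St'_def P_def by (rule sum_psi_lower)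
  have h2: "Ss + Q \<bullet> (s' - s) \<le> Ss'" unfolding Ss_def Ss'_def Q_def by (rule sum_psi_lower)
  have h3: "(t - s) \<bullet> (t - s) + 2 * ((t - s) \<bullet> ((t' - s') - (t - s))) \<le> (t' - s') \<bullet> (t' - s')"
  proof -
    have "0 \<le> ((t' - s') - (t - s)) \<bullet> ((t' - s') - (t - s))" by simp
    thus ?thesis by (simp add: inner_diff_left inner_diff_right inner_commute)
  qed
  have a1: "a * St + a * (P \<bullet> (t' - t)) \<le> a * St'"
    using mult_left_mono[OF h1 a] by (simp add: distrib_left)
  have b1: "b * Ss + b * (Q \<bullet> (s' - s)) \<le> b * Ss'"
    using mult_left_mono[OF h2 b] by (simp add: distrib_left)
  have c1: "c/2 * ((t - s) \<bullet> (t - s)) + c * ((t - s) \<bullet> ((t' - s') - (t - s))) \<le> c/2 * ((t' - s') \<bullet> (t' - s'))"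
    using mult_left_mono[OF h3, of "c/2"] c by (simp add: distrib_left)
  have e3: "(t - s) \<bullet> ((t' - s') - (t - s)) = (t - s) \<bullet> (t' - t) - (t - s) \<bullet> (s' - s)"
    by (simp add: inner_diff_right)
  have "(a * St + b * Ss + c/2 * ((t - s) \<bullet> (t - s)))
      + (a * (P \<bullet> (t' - t)) + c * ((t - s) \<bullet> (t' - t)))
      + (b * (Q \<bullet> (s' - s)) + c * ((s - t) \<bullet> (s' - s)))
      \<le> (a * St' + b * Ss' + c/2 * ((t' - s') \<bullet> (t' - s')))"
  proof -
    have "(s - t) \<bullet> (s' - s) = - ((t - s) \<bullet> (s' - s))" by (simp add: inner_diff_left)
    thus ?thesis using a1 b1 c1 e3 by (simp add: algebra_simps)
  qed
  hence "(1 / real CARD('n)) * ((a * St + b * Ss + c/2 * ((t - s) \<bullet> (t - s)))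
      + (a * (P \<bullet> (t' - t)) + c * ((t - s) \<bullet> (t' - t)))
      + (b * (Q \<bullet> (s' - s)) + c * ((s - t) \<bullet> (s' - s))))
      \<le> (1 / real CARD('n)) * (a * St' + b * Ss' + c/2 * ((t' - s') \<bullet> (t' - s')))"
    by (intro mult_left_mono) auto
  moreover have "X *v (u' - u) = t' - t" by (simp add: t_def t'_def matrix_vector_mult_diff_distrib)
  moreover have "Z *v (v' - v) = s' - s" by (simp add: s_def s'_def matrix_vector_mult_diff_distrib)
  ultimately show ?thesis
    by (simp add: obj_expand G1_inner t_def[symmetric] t'_def[symmetric] s_def[symmetric]
        s'_def[symmetric] P_def[symmetric] Q_def[symmetric] St_def[symmetric] St'_def[symmetric]
        Ss_def[symmetric] Ss'_def[symmetric] distrib_left)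
qed

lemma obj_smooth1:
  fixes X :: "real^'p1^'n" and Z :: "real^'p2^'n" and y :: "real^'n"

  assumes a: "a \<ge> 0" and c: "c \<ge> 0"
  shows "obj l a b c X Z y (u + d, v) \<le> obj l a b c X Z y (u, v) + G1 l a b c X Z y (u, v) \<bullet> d
          + (1 / real CARD('n)) * ((a * kap l + c) / 2 * ((X *v d) \<bullet> (X *v d)))"
proof -
  define t where "t = X *v u"
  define e where "e = X *v d"
  define s where "s = Z *v v"
  define P where "P = (\<chi> i. dpsi l (y$i) (t$i))"
  define St where "St = (\<Sum>i\<in>UNIV. psi l (y$i) (t$i))"
  define St' where "St' = (\<Sum>i\<in>UNIV. psi l (y$i) (t$i + e$i))"
  define Ss where "Ss = (\<Sum>i\<in>UNIV. psi l (y$i) (s$i))"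
  have h1: "St' \<le> St + P \<bullet> e + kap l / 2 * (e \<bullet> e)"
    using sum_psi_upper[of l y "t + e" t] unfolding St_def St'_def P_def by simp
  have h3: "(t + e - s) \<bullet> (t + e - s) = (t - s) \<bullet> (t - s) + 2 * ((t - s) \<bullet> e) + e \<bullet> e"
    by (simp add: inner_diff_left inner_diff_right inner_add_left inner_add_right inner_commute)
  have a1: "a * St' \<le> a * St + a * (P \<bullet> e) + (a * kap l) / 2 * (e \<bullet> e)"
    using mult_left_mono[OF h1 a] by (simp add: distrib_left)
  have "a * St' + b * Ss + c/2 * ((t + e - s) \<bullet> (t + e - s)) \<le>
     (a * St + b * Ss + c/2 * ((t - s) \<bullet> (t - s))) + (a * (P \<bullet> e) + c * ((t - s) \<bullet> e))
     + (a * kap l + c) / 2 * (e \<bullet> e)"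
    using a1 h3 by (simp add: algebra_simps inner_commute add_divide_distrib)
  hence "(1 / real CARD('n)) * (a * St' + b * Ss + c/2 * ((t + e - s) \<bullet> (t + e - s))) \<le>
     (1 / real CARD('n)) * ((a * St + b * Ss + c/2 * ((t - s) \<bullet> (t - s))) + (a * (P \<bullet> e) + c * ((t - s) \<bullet> e))
     + (a * kap l + c) / 2 * (e \<bullet> e))"
    by (intro mult_left_mono) auto
  moreover have "X *v (u + d) = t + e" by (simp add: t_def e_def matrix_vector_right_distrib)
  ultimately show ?thesis
    by (simp add: obj_expand G1_inner t_def[symmetric] e_def[symmetric] s_def[symmetric]
        P_def[symmetric] St_def[symmetric] St'_def[symmetric] Ss_def[symmetric] distrib_left)
qed



lemma sum_UNIV_plus: "(\<Sum>k\<in>(UNIV::('a::finite + 'b::finite) set). f k) =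
   (\<Sum>i\<in>UNIV. f (Inl i)) + (\<Sum>j\<in>UNIV. f (Inr j))"
  using sum.Plus[of "UNIV::'a set" "UNIV::'b set" f] by (simp add: comp_def)

lemma Lmat_sym: "transpose (Lmat l a b c X Z) = Lmat l a b c X Z"
  unfolding Lmat_def Let_def
  by (simp add: vec_eq_iff transpose_def matrix_matrix_mult_def mult.commute split: sum.splits)

definition embL :: "real^'p1 \<Rightarrow> real^('p1 + 'p2::finite)" where
  "embL d = (\<chi> k. case k of Inl i \<Rightarrow> d$i | Inr j \<Rightarrow> 0)"
definition embR :: "real^'p2 \<Rightarrow> real^('p1::finite + 'p2)" where
  "embR d = (\<chi> k. case k of Inl i \<Rightarrow> 0 | Inr j \<Rightarrow> d$j)"

lemma embL_norm: "embL d \<bullet> embL d = d \<bullet> d"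
  by (simp add: embL_def inner_vec_def sum_UNIV_plus)
lemma embR_norm: "embR d \<bullet> embR d = d \<bullet> d"
  by (simp add: embR_def inner_vec_def sum_UNIV_plus)

lemma XtX:
  fixes X :: "real^'p^'n"
  shows "d \<bullet> ((transpose X ** X) *v d) = (X *v d) \<bullet> (X *v d)"
proof -
  have "d \<bullet> ((transpose X ** X) *v d) = d \<bullet> (transpose X *v (X *v d))"
    by (simp add: matrix_vector_mul_assoc)
  also have "\<dots> = (d v* transpose X) \<bullet> (X *v d)" by (rule dot_lmul_matrix[symmetric])
  finally show ?thesis by simp
qed

lemma embL_quad:
  fixes X :: "real^'p1^'n" and Z :: "real^'p2^'n" and d :: "real^'p1"
  shows "embL d \<bullet> (Lmat l a b c X Z *v embL d :: real^('p1+'p2)) =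
    (1 / real CARD('n)) * ((a * kap l + c) * ((X *v d) \<bullet> (X *v d)))"
proof -
  define ca where "ca = (case l of Lin \<Rightarrow> a | Log \<Rightarrow> a/4)"
  have ca: "ca = a * kap l" by (cases l) (simp_all add: ca_def kap_def)
  have "embL d \<bullet> (Lmat l a b c X Z *v embL d :: real^('p1+'p2)) =
      (\<Sum>i\<in>UNIV. d$i * (\<Sum>j\<in>UNIV. (1 / real CARD('n)) * ((ca + c) * (transpose X ** X)$i$j) * d$j))"
    by (simp add: embL_def Lmat_def Let_def ca_def inner_vec_def matrix_vector_mult_def sum_UNIV_plus)
  also have "\<dots> = (1 / real CARD('n)) * ((ca + c) * (d \<bullet> ((transpose X ** X) *v d)))"
    by (simp add: inner_vec_def matrix_vector_mult_def sum_distrib_left mult_ac)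
  finally show ?thesis by (simp add: XtX ca)
qed

lemma embR_quad:
  fixes X :: "real^'p1^'n" and Z :: "real^'p2^'n" and d :: "real^'p2"
  shows "embR d \<bullet> (Lmat l a b c X Z *v embR d :: real^('p1+'p2)) =
    (1 / real CARD('n)) * ((b * kap l + c) * ((Z *v d) \<bullet> (Z *v d)))"
proof -
  define cb where "cb = (case l of Lin \<Rightarrow> b | Log \<Rightarrow> b/4)"
  have cb: "cb = b * kap l" by (cases l) (simp_all add: cb_def kap_def)
  have "embR d \<bullet> (Lmat l a b c X Z *v embR d :: real^('p1+'p2)) =
      (\<Sum>i\<in>UNIV. d$i * (\<Sum>j\<in>UNIV. (1 / real CARD('n)) * ((cb + c) * (transpose Z ** Z)$i$j) * d$j))"
    by (simp add: embR_def Lmat_def Let_def cb_def inner_vec_def matrix_vector_mult_def sum_UNIV_plus)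
  also have "\<dots> = (1 / real CARD('n)) * ((cb + c) * (d \<bullet> ((transpose Z ** Z) *v d)))"
    by (simp add: inner_vec_def matrix_vector_mult_def sum_distrib_left mult_ac)
  finally show ?thesis by (simp add: XtX cb)
qed



lemma grad1_obj:
  fixes X :: "real^'p1^'n" and Z :: "real^'p2^'n" and y :: "real^'n"
  assumes a: "a \<ge> 0" and b: "b \<ge> 0" and c: "c \<ge> 0"
  shows "grad1 (obj l a b c X Z y) \<beta> = G1 l a b c X Z y \<beta>"
proof -
  obtain u v where \<beta>: "\<beta> = (u, v)" by fastforce
  obtain KX where KX: "KX > 0" "\<And>x. norm (X *v x) \<le> norm x * KX"
    using bounded_linear.pos_bounded[OF matrix_vector_mul_bounded_linear[of X]] by blast
  have kp: "kap l \<ge> 0" by (cases l) (simp_all add: kap_def)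
  define C0 where "C0 = (1 / real CARD('n)) * ((a * kap l + c) / 2)"
  have C0: "C0 \<ge> 0" unfolding C0_def using a c kp by simp
  define K where "K = C0 * KX^2"
  have K0: "K \<ge> 0" unfolding K_def using C0 by simp
  have "(THE g. GDERIV (\<lambda>w. obj l a b c X Z y (w, v)) u :> g) = G1 l a b c X Z y (u, v)"
  proof (rule gderiv_from_bounds[OF _ _ K0])
    fix d
    show "0 \<le> obj l a b c X Z y (u + d, v) - obj l a b c X Z y (u, v) - d \<bullet> G1 l a b c X Z y (u, v)"
      using obj_convex[OF a b c, where l=l and X=X and Z=Z and y=y and u=u and v=v and u'="u + d" and v'=v] by (simp add: inner_commute)
    have "obj l a b c X Z y (u + d, v) - obj l a b c X Z y (u, v) - d \<bullet> G1 l a b c X Z y (u, v)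
        \<le> C0 * ((X *v d) \<bullet> (X *v d))"
      using obj_smooth1[OF a c, where l=l and X=X and Z=Z and y=y and u=u and d=d and v=v and b=b] by (simp add: inner_commute C0_def)
    also have "(X *v d) \<bullet> (X *v d) \<le> (norm d * KX)^2"
    proof -
      have "(X *v d) \<bullet> (X *v d) = (norm (X *v d))^2" by (simp add: dot_square_norm)
      also have "\<dots> \<le> (norm d * KX)^2" using KX(2)[of d] by (intro power_mono) auto
      finally show ?thesis .
    qed
    hence "C0 * ((X *v d) \<bullet> (X *v d)) \<le> C0 * (norm d * KX)^2" using C0 by (intro mult_left_mono)
    finally show "obj l a b c X Z y (u + d, v) - obj l a b c X Z y (u, v) - d \<bullet> G1 l a b c X Z y (u, v)
        \<le> K * (norm d)^2" by (simp add: K_def power_mult_distrib mult_ac)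
  qed
  thus ?thesis by (simp add: grad1_def \<beta>)
qed

lemma grad2_obj:
  fixes X :: "real^'p1^'n" and Z :: "real^'p2^'n" and y :: "real^'n"
  assumes a: "a \<ge> 0" and b: "b \<ge> 0" and c: "c \<ge> 0"
  shows "grad2 (obj l a b c X Z y) \<beta> = G1 l b a c Z X y (snd \<beta>, fst \<beta>)"
proof -
  have "(\<lambda>w. obj l a b c X Z y (fst \<beta>, w)) = (\<lambda>w. obj l b a c Z X y (w, fst \<beta>))"
    by (intro ext) (rule obj_swap)
  hence "grad2 (obj l a b c X Z y) \<beta> = grad1 (obj l b a c Z X y) (snd \<beta>, fst \<beta>)"
    by (simp add: grad1_def grad2_def)
  thus ?thesis using grad1_obj[OF b a c] by simp
qed

lemma finite_supp: "finite {i. (v::real^'p)$i \<noteq> 0}" by simp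

lemma proj_coord_zero:
  fixes u g :: "real^'p"
  assumes P: "u \<in> proj_sparse s (u - \<alpha> *\<^sub>R g)" and \<alpha>: "\<alpha> > 0"
    and sp: "l0norm (\<chi> k. if k = i then u$i - \<alpha> * g$i else u$k) \<le> s"
  shows "g$i = 0"
proof -
  define w where "w = u - \<alpha> *\<^sub>R g"
  define u' where "u' = (\<chi> k. if k = i then u$i - \<alpha> * g$i else u$k)"
  have "u' \<in> sparse_set s" using sp unfolding sparse_set_def u'_def by simp
  hence "dist w u \<le> dist w u'" using P unfolding proj_sparse_def w_def by blast
  hence le: "(w - u) \<bullet> (w - u) \<le> (w - u') \<bullet> (w - u')" unfolding dist_norm norm_le .
  define h where "h k = (\<alpha> * g$k) * (\<alpha> * g$k)" for k
  have c1: "(w - u)$k = - (\<alpha> * g$k)" for k by (simp add: w_def)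
  have c2: "(w - u')$k = (if k = i then 0 else - (\<alpha> * g$k))" for k
    by (simp add: w_def u'_def)
  have e1: "(w - u) \<bullet> (w - u) = (\<Sum>k\<in>UNIV. h k)"
    unfolding inner_vec_def c1 h_def by simp
  have "(w - u') \<bullet> (w - u') = (\<Sum>k\<in>UNIV. h k - (if k = i then h k else 0))"
    unfolding inner_vec_def c2 h_def by (intro sum.cong) auto
  also have "\<dots> = (\<Sum>k\<in>UNIV. h k) - h i"
    by (simp add: sum_subtractf)
  finally have "h i \<le> 0" using le e1 by simp
  moreover have "h i \<ge> 0" unfolding h_def by simp
  ultimately have "(\<alpha> * g$i) * (\<alpha> * g$i) = 0" unfolding h_def by simp
  thus ?thesis using \<alpha> by simp
qed


lemma stat_facts:
  fixes u g :: "real^'p"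
  assumes P: "u \<in> proj_sparse s (u - \<alpha> *\<^sub>R g)" and \<alpha>: "\<alpha> > 0"
  shows "u \<in> sparse_set s" and "\<And>i. u$i \<noteq> 0 \<Longrightarrow> g$i = 0" and "l0norm u < s \<Longrightarrow> g = 0"
proof -
  show us: "u \<in> sparse_set s" using P unfolding proj_sparse_def by blast
  hence us': "card {k. u$k \<noteq> 0} \<le> s" unfolding sparse_set_def l0norm_def by simp
  fix i assume ui: "u$i \<noteq> 0"
  have "{k. (\<chi> k. if k = i then u$i - \<alpha> * g$i else u$k)$k \<noteq> (0::real)} \<subseteq> {k. u$k \<noteq> 0}"
    using ui by auto
  hence "card {k. (\<chi> k. if k = i then u$i - \<alpha> * g$i else u$k)$k \<noteq> (0::real)} \<le> card {k. u$k \<noteq> 0}"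
    by (intro card_mono) auto
  hence "l0norm (\<chi> k. if k = i then u$i - \<alpha> * g$i else u$k) \<le> s"
    unfolding l0norm_def using us' by simp
  thus "g$i = 0" by (rule proj_coord_zero[OF P \<alpha>])
next
  assume lt: "l0norm u < s"
  show "g = 0"
  proof (subst vec_eq_iff, intro allI)
    fix i
    have "{k. (\<chi> k. if k = i then u$i - \<alpha> * g$i else u$k)$k \<noteq> (0::real)} \<subseteq> insert i {k. u$k \<noteq> 0}"
      by auto
    hence "card {k. (\<chi> k. if k = i then u$i - \<alpha> * g$i else u$k)$k \<noteq> (0::real)} \<le> card (insert i {k. u$k \<noteq> 0})"
      by (intro card_mono) auto
    also have "\<dots> \<le> Suc (card {k. u$k \<noteq> 0})" by (simp add: card_insert_if)
    finally have "l0norm (\<chi> k. if k = i then u$i - \<alpha> * g$i else u$k) \<le> s"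
      using lt unfolding l0norm_def by simp
    thus "g$i = 0$i" using proj_coord_zero[OF P \<alpha>] by simp
  qed
qed

lemma inner_zero_near:
  fixes u u' g :: "real^'p"
  assumes a: "\<And>i. u$i \<noteq> 0 \<Longrightarrow> g$i = 0" and b: "l0norm u < s \<Longrightarrow> g = 0"
    and s': "l0norm u' \<le> s" and near: "\<And>i. u$i \<noteq> 0 \<Longrightarrow> u'$i \<noteq> 0"
  shows "g \<bullet> (u' - u) = 0"
proof (cases "l0norm u < s")
  case True thus ?thesis using b by simp
next
  case False
  have sub: "{k. u$k \<noteq> 0} \<subseteq> {k. u'$k \<noteq> 0}" using near by auto
  have "card {k. u'$k \<noteq> 0} \<le> card {k. u$k \<noteq> 0}" using False s' unfolding l0norm_def by simp
  moreover have "card {k. u$k \<noteq> 0} \<le> card {k. u'$k \<noteq> 0}" by (rule card_mono[OF finite_supp sub])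
  ultimately have "card {k. u$k \<noteq> 0} = card {k. u'$k \<noteq> 0}" by (rule antisym[rotated])
  hence eq: "{k. u$k \<noteq> 0} = {k. u'$k \<noteq> 0}" by (rule card_subset_eq[OF finite_supp sub])
  have "g$k * (u'$k - u$k) = 0" for k
  proof (cases "u$k = 0")
    case True
    hence "u'$k = 0" using eq by blast
    thus ?thesis using True by simp
  next
    case False thus ?thesis using a[OF False] by simp
  qed
  hence "(\<Sum>k\<in>UNIV. g$k * (u'$k - u$k)) = 0" by (intro sum.neutral) blast
  thus ?thesis unfolding inner_vec_def by simp
qed

lemma proj_from_descent:
  fixes u g :: "real^'p"
  assumes us: "u \<in> sparse_set s" and \<alpha>: "\<alpha> > 0" and L: "\<alpha> * L < 1"
    and desc: "\<And>w. w \<in> sparse_set s \<Longrightarrow> 0 \<le> 2 * (g \<bullet> (w - u)) + L * ((w - u) \<bullet> (w - u))"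
  shows "u \<in> proj_sparse s (u - \<alpha> *\<^sub>R g)"
  unfolding proj_sparse_def
proof (intro CollectI conjI ballI us)
  fix w :: "real^'p" assume ws: "w \<in> sparse_set s"
  define d where "d = w - u"
  have dd: "d \<bullet> d \<ge> 0" by simp
  have "0 \<le> \<alpha> * (2 * (g \<bullet> d) + L * (d \<bullet> d))" using desc[OF ws] \<alpha> unfolding d_def by simp
  also have "\<dots> = 2 * \<alpha> * (g \<bullet> d) + (\<alpha> * L) * (d \<bullet> d)" by (simp add: algebra_simps)
  also have "\<dots> \<le> 2 * \<alpha> * (g \<bullet> d) + 1 * (d \<bullet> d)"
    using L dd by (intro add_left_mono mult_right_mono) auto
  finally have key: "0 \<le> 2 * \<alpha> * (g \<bullet> d) + d \<bullet> d" by simp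
  have "(u - \<alpha> *\<^sub>R g - u) \<bullet> (u - \<alpha> *\<^sub>R g - u) = \<alpha>^2 * (g \<bullet> g)"
    by (simp add: power2_eq_square)
  also have "\<dots> \<le> \<alpha>^2 * (g \<bullet> g) + 2 * \<alpha> * (g \<bullet> d) + d \<bullet> d" using key by simp
  also have "\<dots> = (u - \<alpha> *\<^sub>R g - w) \<bullet> (u - \<alpha> *\<^sub>R g - w)"
  proof -
    have e: "u - \<alpha> *\<^sub>R g - w = - (\<alpha> *\<^sub>R g + d)" by (simp add: d_def algebra_simps)
    show ?thesis unfolding e by (simp add: inner_add_left inner_add_right inner_commute power2_eq_square algebra_simps)
  qed
  finally show "dist (u - \<alpha> *\<^sub>R g) u \<le> dist (u - \<alpha> *\<^sub>R g) w"
    unfolding dist_norm norm_le .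
qed



theorem theorem3p4:
  fixes l :: loss and a b c :: real and s1 s2 :: nat
    and X :: "real^'p1^'n" and Z :: "real^'p2^'n" and y :: "real^'n"
  assumes "a > 0" and "b > 0" and "c > 0"
    and "1 \<le> s1" and "s1 \<le> CARD('p1)" and "1 \<le> s2" and "s2 \<le> CARD('p2)"
    and "l = Log \<Longrightarrow> \<forall>i. y $ i \<in> {0, 1}"
  shows "(\<forall>\<alpha> \<beta>. \<alpha> > 0 \<and> alpha_stationary (obj l a b c X Z y) s1 s2 \<alpha> \<beta> \<longrightarrow>
            local_min (obj l a b c X Z y) s1 s2 \<beta> \<and>
            (l0norm (fst \<beta>) < s1 \<and> l0norm (snd \<beta>) < s2 \<longrightarrow>
               global_min (obj l a b c X Z y) s1 s2 \<beta>))
       \<and> (\<forall>\<beta>. global_min (obj l a b c X Z y) s1 s2 \<beta> \<longrightarrow>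
            (\<forall>\<alpha>. 0 < \<alpha> \<and> \<alpha> * Lf l a b c X Z < 1 \<longrightarrow>
               alpha_stationary (obj l a b c X Z y) s1 s2 \<alpha> \<beta>))"
proof -
  have a0: "a \<ge> 0" and b0: "b \<ge> 0" and c0: "c \<ge> 0" using assms(1-3) by auto
  have conv: "obj l a b c X Z y (u, v) + G1 l a b c X Z y (u, v) \<bullet> (u' - u)
          + G1 l b a c Z X y (v, u) \<bullet> (v' - v) \<le> obj l a b c X Z y (u', v')" for u v u' v'
    by (rule obj_convex[OF a0 b0 c0])
  have part1: "\<forall>\<alpha> \<beta>. \<alpha> > 0 \<and> alpha_stationary (obj l a b c X Z y) s1 s2 \<alpha> \<beta> \<longrightarrow>
            local_min (obj l a b c X Z y) s1 s2 \<beta> \<and>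
            (l0norm (fst \<beta>) < s1 \<and> l0norm (snd \<beta>) < s2 \<longrightarrow>
               global_min (obj l a b c X Z y) s1 s2 \<beta>)"
  proof (intro allI impI)
    fix \<alpha> \<beta> assume h: "\<alpha> > 0 \<and> alpha_stationary (obj l a b c X Z y) s1 s2 \<alpha> \<beta>"
    hence \<alpha>: "\<alpha> > 0" by simp
    obtain u v where \<beta>: "\<beta> = (u, v)" by fastforce
    define g where "g = G1 l a b c X Z y (u, v)"
    define h2 where "h2 = G1 l b a c Z X y (v, u)"
    have P1: "u \<in> proj_sparse s1 (u - \<alpha> *\<^sub>R g)"
      using h grad1_obj[OF a0 b0 c0, of l X Z y \<beta>] unfolding alpha_stationary_def \<beta> g_def by simp
    have P2: "v \<in> proj_sparse s2 (v - \<alpha> *\<^sub>R h2)"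
      using h grad2_obj[OF a0 b0 c0, of l X Z y \<beta>] unfolding alpha_stationary_def \<beta> h2_def by simp
    note F1 = stat_facts[OF P1 \<alpha>] and F2 = stat_facts[OF P2 \<alpha>]
    have feas: "feasible s1 s2 (u, v)" unfolding feasible_def using F1(1) F2(1) by simp
    have lm: "local_min (obj l a b c X Z y) s1 s2 \<beta>"
      unfolding local_min_def \<beta>
    proof (intro conjI feas)
      define A where "A = insert 1 ((\<lambda>i. \<bar>u$i\<bar>) ` {i. u$i \<noteq> 0} \<union> (\<lambda>j. \<bar>v$j\<bar>) ` {j. v$j \<noteq> 0})"
      define e where "e = Min A"
      have finA: "finite A" unfolding A_def by simp
      have epos: "e > 0" unfolding e_def using finA by (subst Min_gr_iff) (auto simp: A_def)
      have eu: "e \<le> \<bar>u$i\<bar>" if "u$i \<noteq> 0" for i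
        unfolding e_def using finA that by (intro Min_le) (auto simp: A_def)
      have ev: "e \<le> \<bar>v$i\<bar>" if "v$i \<noteq> 0" for i
        unfolding e_def using finA that by (intro Min_le) (auto simp: A_def)
      show "\<exists>e>0. \<forall>\<gamma>. feasible s1 s2 \<gamma> \<and> dist \<gamma> (u, v) < e \<longrightarrow>
          obj l a b c X Z y (u, v) \<le> obj l a b c X Z y \<gamma>"
      proof (intro exI[of _ e] conjI allI impI epos)
        fix \<gamma> assume hg: "feasible s1 s2 \<gamma> \<and> dist \<gamma> (u, v) < e"
        obtain u' v' where \<gamma>: "\<gamma> = (u', v')" by fastforce
        have du: "dist u' u < e" using hg dist_fst_le[of \<gamma> "(u,v)"] unfolding \<gamma> by simp
        have dv: "dist v' v < e" using hg dist_snd_le[of \<gamma> "(u,v)"] unfolding \<gamma> by simp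
        have near1: "u'$i \<noteq> 0" if "u$i \<noteq> 0" for i
        proof
          assume "u'$i = 0"
          hence "\<bar>u$i\<bar> = \<bar>(u' - u)$i\<bar>" by simp
          also have "\<dots> \<le> norm (u' - u)" by (rule component_le_norm_cart)
          also have "\<dots> < e" using du by (simp add: dist_norm)
          finally show False using eu[OF that] by simp
        qed
        have near2: "v'$i \<noteq> 0" if "v$i \<noteq> 0" for i
        proof
          assume "v'$i = 0"
          hence "\<bar>v$i\<bar> = \<bar>(v' - v)$i\<bar>" by simp
          also have "\<dots> \<le> norm (v' - v)" by (rule component_le_norm_cart)
          also have "\<dots> < e" using dv by (simp add: dist_norm)
          finally show False using ev[OF that] by simp
        qed
        have s1': "l0norm u' \<le> s1" and s2': "l0norm v' \<le> s2"
          using hg unfolding \<gamma> feasible_def sparse_set_def by auto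
        have "g \<bullet> (u' - u) = 0" by (rule inner_zero_near[OF F1(2) F1(3) s1' near1])
        moreover have "h2 \<bullet> (v' - v) = 0" by (rule inner_zero_near[OF F2(2) F2(3) s2' near2])
        ultimately show "obj l a b c X Z y (u, v) \<le> obj l a b c X Z y \<gamma>"
          using conv[of u v u' v'] unfolding \<gamma> g_def h2_def by simp
      qed
    qed
    moreover have "global_min (obj l a b c X Z y) s1 s2 \<beta>"
      if lt: "l0norm (fst \<beta>) < s1 \<and> l0norm (snd \<beta>) < s2"
    proof -
      have "g = 0" using F1(3) lt \<beta> by simp
      moreover have "h2 = 0" using F2(3) lt \<beta> by simp
      ultimately show ?thesis unfolding global_min_def \<beta> using feas conv unfolding g_def h2_def
        by (metis add.right_neutral inner_zero_left prod.collapse)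
    qed
    ultimately show "local_min (obj l a b c X Z y) s1 s2 \<beta> \<and>
            (l0norm (fst \<beta>) < s1 \<and> l0norm (snd \<beta>) < s2 \<longrightarrow>
               global_min (obj l a b c X Z y) s1 s2 \<beta>)" by blast
  qed
  have part2: "\<forall>\<beta>. global_min (obj l a b c X Z y) s1 s2 \<beta> \<longrightarrow>
            (\<forall>\<alpha>. 0 < \<alpha> \<and> \<alpha> * Lf l a b c X Z < 1 \<longrightarrow>
               alpha_stationary (obj l a b c X Z y) s1 s2 \<alpha> \<beta>)"
  proof (intro allI impI)
    fix \<beta> \<alpha> assume gm: "global_min (obj l a b c X Z y) s1 s2 \<beta>"
      and h: "0 < \<alpha> \<and> \<alpha> * Lf l a b c X Z < 1"
    obtain u v where \<beta>: "\<beta> = (u, v)" by fastforce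
    have us: "u \<in> sparse_set s1" and vs: "v \<in> sparse_set s2"
      using gm unfolding global_min_def feasible_def \<beta> by auto
    have opt: "obj l a b c X Z y (u, v) \<le> obj l a b c X Z y (u', v')"
      if "u' \<in> sparse_set s1" "v' \<in> sparse_set s2" for u' v'
      using gm that unfolding global_min_def feasible_def \<beta> by auto
    define LL where "LL = Lf l a b c X Z"
    have quad: "w \<bullet> (Lmat l a b c X Z *v w) \<le> LL * (w \<bullet> w)" for w :: "real^('p1+'p2)"
      unfolding LL_def Lf_def by (rule quad_le_lambda_max[OF Lmat_sym])
    have d1: "0 \<le> 2 * (G1 l a b c X Z y (u, v) \<bullet> (w - u)) + LL * ((w - u) \<bullet> (w - u))"
      if ws: "w \<in> sparse_set s1" for w
    proof -
      define d where "d = w - u"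
      have w: "w = u + d" by (simp add: d_def)
      have "obj l a b c X Z y (u, v) \<le> obj l a b c X Z y (u + d, v)" using opt[OF ws vs] w by simp
      also have "\<dots> \<le> obj l a b c X Z y (u, v) + G1 l a b c X Z y (u, v) \<bullet> d
          + (1 / real CARD('n)) * ((a * kap l + c) / 2 * ((X *v d) \<bullet> (X *v d)))"
        by (rule obj_smooth1[OF a0 c0])
      finally have "0 \<le> 2 * (G1 l a b c X Z y (u, v) \<bullet> d)
          + (1 / real CARD('n)) * ((a * kap l + c) * ((X *v d) \<bullet> (X *v d)))" by simp
      also have "(1 / real CARD('n)) * ((a * kap l + c) * ((X *v d) \<bullet> (X *v d))) \<le> LL * (d \<bullet> d)"
        using quad[of "embL d"] embL_quad[of d l a b c X Z] embL_norm[of d] by (simp add: embL_norm[where 'b='p2])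
      finally show ?thesis by (simp add: d_def)
    qed
    have d2: "0 \<le> 2 * (G1 l b a c Z X y (v, u) \<bullet> (w - v)) + LL * ((w - v) \<bullet> (w - v))"
      if ws: "w \<in> sparse_set s2" for w
    proof -
      define d where "d = w - v"
      have w: "w = v + d" by (simp add: d_def)
      have "obj l b a c Z X y (v, u) \<le> obj l b a c Z X y (v + d, u)"
        using opt[OF us ws] w obj_swap[of l a b c X Z y] by simp
      also have "\<dots> \<le> obj l b a c Z X y (v, u) + G1 l b a c Z X y (v, u) \<bullet> d
          + (1 / real CARD('n)) * ((b * kap l + c) / 2 * ((Z *v d) \<bullet> (Z *v d)))"
        by (rule obj_smooth1[OF b0 c0])
      finally have "0 \<le> 2 * (G1 l b a c Z X y (v, u) \<bullet> d)
          + (1 / real CARD('n)) * ((b * kap l + c) * ((Z *v d) \<bullet> (Z *v d)))" by simp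
      also have "(1 / real CARD('n)) * ((b * kap l + c) * ((Z *v d) \<bullet> (Z *v d))) \<le> LL * (d \<bullet> d)"
        using quad[of "embR d"] embR_quad[of d l a b c X Z] embR_norm[of d] by (simp add: embR_norm[where 'a='p1])
      finally show ?thesis by (simp add: d_def)
    qed
    have "u \<in> proj_sparse s1 (u - \<alpha> *\<^sub>R G1 l a b c X Z y (u, v))"
      by (rule proj_from_descent[OF us _ _ d1]) (use h LL_def in auto)
    moreover have "v \<in> proj_sparse s2 (v - \<alpha> *\<^sub>R G1 l b a c Z X y (v, u))"
      by (rule proj_from_descent[OF vs _ _ d2]) (use h LL_def in auto)
    ultimately show "alpha_stationary (obj l a b c X Z y) s1 s2 \<alpha> \<beta>"
      unfolding alpha_stationary_def grad1_obj[OF a0 b0 c0] grad2_obj[OF a0 b0 c0] \<beta> by simp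
  qed
  show ?thesis using part1 part2 by blast
qed


end
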